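(* Let $G=(V,E)$ be a multigraph with vertices $u_1,\dots,u_k$ ($k\ge2$) and edges $e_1,\dots,e_\ell$ with $\ell>2k$, and consider the fair division instance $\mathcal{I}(G)$ described in the context. If $G$ has an independent set of size $t$, then $\mathcal{I}(G)$ has an EF1 allocation with social welfare at least $t$.
   Context: Instance $\mathcal{I}(G)$: agents are $a_i^{(j)}$ ($1\le i\le\ell$, $1\le j\le k$) and $s^{(j)}$ ($1\le j\le k$), so $n=k\ell+k$. Items are $b_r^{(j)}$ ($1\le r\le k$, $1\le j\le k$), with $B^{(j)}=\{b_1^{(j)},\dots,b_k^{(j)}\}$, and $c_1,\dots,c_{k^2}$ forming $C$, so $m=2k^2$. Let $\tau=2/k^2$. Agent $s^{(j)}$ values each item of $B^{(j)}$ at $1/k$ and every other item at $0$. If edge $e_i$ has endpoints $u_{i_1},u_{i_2}$, agent $a_i^{(j)}$ values each of $b_{i_1}^{(j)},b_{i_2}^{(j)}$ at $\tau/2$, each item of $C$ at $(1-\tau)/k^2$, and every other item at $0$. Valuations are additive (and normalized). An allocation is a partition of the items among agents; it is EF1 if for all agents $x\ne y$ with $A_y\ne\emptyset$ there is $g\in A_y$ with $v_x(A_x)\ge v_x(A_y\setminus\{g\})$; social welfare is $\sum_x v_x(A_x)$. An independent set is a set of vertices no two of which are joined by an edge. *)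

theory Defs
  imports Main "HOL-Library.Multiset" Complex_Main
begin

text \<open>Multigraph on vertices 1..k with edges 1..l; edge i has endpoints
  fst (ep i) and snd (ep i) (distinct, parallel edges allowed).\<close>

definition valid_multigraph :: "nat \<Rightarrow> nat \<Rightarrow> (nat \<Rightarrow> nat \<times> nat) \<Rightarrow> bool" where
  "valid_multigraph k l ep \<longleftrightarrow>
     (\<forall>i\<in>{1..l}. fst (ep i) \<in> {1..k} \<and> snd (ep i) \<in> {1..k} \<and> fst (ep i) \<noteq> snd (ep i))"

definition independent_set :: "nat \<Rightarrow> nat \<Rightarrow> (nat \<Rightarrow> nat \<times> nat) \<Rightarrow> nat set \<Rightarrow> bool" where
  "independent_set k l ep I \<longleftrightarrow> I \<subseteq> {1..k} \<and>
     (\<forall>u\<in>I. \<forall>w\<in>I. \<not> (\<exists>i\<in>{1..l}. ep i = (u, w) \<or> ep i = (w, u)))"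

datatype agent = Ag nat nat  \<comment> \<open>Ag i j = a_i^(j)\<close>
               | Sg nat      \<comment> \<open>Sg j = s^(j)\<close>

datatype item = Bi nat nat   \<comment> \<open>Bi r j = b_r^(j)\<close>
              | Ci nat       \<comment> \<open>Ci c = c_c\<close>

definition agents :: "nat \<Rightarrow> nat \<Rightarrow> agent set" where
  "agents k l = {Ag i j | i j. i \<in> {1..l} \<and> j \<in> {1..k}} \<union> {Sg j | j. j \<in> {1..k}}"

definition items :: "nat \<Rightarrow> item set" where
  "items k = {Bi r j | r j. r \<in> {1..k} \<and> j \<in> {1..k}} \<union> {Ci c | c. c \<in> {1..k^2}}"

definition tau :: "nat \<Rightarrow> real" where
  "tau k = 2 / (real k)^2"

fun val :: "nat \<Rightarrow> (nat \<Rightarrow> nat \<times> nat) \<Rightarrow> agent \<Rightarrow> item \<Rightarrow> real" where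
  "val k ep (Sg j) (Bi r j') = (if j' = j then 1 / real k else 0)"
| "val k ep (Sg j) (Ci c) = 0"
| "val k ep (Ag i j) (Bi r j') =
     (if j' = j \<and> (r = fst (ep i) \<or> r = snd (ep i)) then tau k / 2 else 0)"
| "val k ep (Ag i j) (Ci c) = (1 - tau k) / (real k)^2"

definition bundle_val :: "nat \<Rightarrow> (nat \<Rightarrow> nat \<times> nat) \<Rightarrow> agent \<Rightarrow> item set \<Rightarrow> real" where
  "bundle_val k ep x A = (\<Sum>g\<in>A. val k ep x g)"

text \<open>An allocation (partition of the items among the agents) is given by a map
  assigning each item to an agent; the bundle of agent x is its preimage.\<close>

definition is_allocation :: "nat \<Rightarrow> nat \<Rightarrow> (item \<Rightarrow> agent) \<Rightarrow> bool" where
  "is_allocation k l \<pi> \<longleftrightarrow> (\<forall>g\<in>items k. \<pi> g \<in> agents k l)"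

definition bundleOf :: "nat \<Rightarrow> (item \<Rightarrow> agent) \<Rightarrow> agent \<Rightarrow> item set" where
  "bundleOf k \<pi> x = {g \<in> items k. \<pi> g = x}"

definition EF1 :: "nat \<Rightarrow> nat \<Rightarrow> (nat \<Rightarrow> nat \<times> nat) \<Rightarrow> (item \<Rightarrow> agent) \<Rightarrow> bool" where
  "EF1 k l ep \<pi> \<longleftrightarrow>
     (\<forall>x\<in>agents k l. \<forall>y\<in>agents k l. x \<noteq> y \<and> bundleOf k \<pi> y \<noteq> {} \<longrightarrow>
        (\<exists>g\<in>bundleOf k \<pi> y.
           bundle_val k ep x (bundleOf k \<pi> x) \<ge> bundle_val k ep x (bundleOf k \<pi> y - {g})))"

definition social_welfare :: "nat \<Rightarrow> nat \<Rightarrow> (nat \<Rightarrow> nat \<times> nat) \<Rightarrow> (item \<Rightarrow> agent) \<Rightarrow> real" where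
  "social_welfare k l ep \<pi> = (\<Sum>x\<in>agents k l. bundle_val k ep x (bundleOf k \<pi> x))"

end

theory Submission
  imports Defs
begin

lemma agents_eq: "agents k l = (\<lambda>(i,j). Ag i j) ` ({1..l}\<times>{1..k}) \<union> Sg ` {1..k}"
  unfolding agents_def by auto

lemma items_eq: "items k = (\<lambda>(r,j). Bi r j) ` ({1..k}\<times>{1..k}) \<union> Ci ` {1..k^2}"
  unfolding items_def by auto

lemma finite_agents: "finite (agents k l)" unfolding agents_eq by auto
lemma finite_items: "finite (items k)" unfolding items_eq by auto

lemma val_nonneg: "k \<ge> 2 \<Longrightarrow> 0 \<le> val k ep x g"
proof -
  assume k: "k \<ge> 2"
  have "real k \<ge> 2" using k by simp
  hence "(2::real) ^ 2 \<le> real k ^ 2" by (rule power_mono) simp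
  hence "real k ^ 2 \<ge> 4" by simp
  hence "tau k \<le> 1" unfolding tau_def by (simp add: divide_le_eq)
  moreover have "tau k \<ge> 0" unfolding tau_def by simp
  ultimately show ?thesis by (cases x; cases g) auto
qed

lemma ef1_pair:
  assumes fin: "finite B" and ne: "B \<noteq> {}"
    and one: "\<forall>g\<in>B. \<forall>h\<in>B. val k ep x g \<noteq> 0 \<longrightarrow> val k ep x h \<noteq> 0 \<longrightarrow> g = h"
    and own: "0 \<le> v"
  shows "\<exists>g\<in>B. v \<ge> bundle_val k ep x (B - {g})"
proof (cases "\<exists>g\<in>B. val k ep x g \<noteq> 0")
  case True
  then obtain g where g: "g \<in> B" "val k ep x g \<noteq> 0" by blast
  have "bundle_val k ep x (B - {g}) = 0" unfolding bundle_val_def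
    by (rule sum.neutral) (use one g in blast)
  thus ?thesis using g(1) own by (intro bexI[of _ g]) auto
next
  case False
  then obtain g where g: "g \<in> B" using ne by blast
  have "bundle_val k ep x (B - {g}) = 0" unfolding bundle_val_def
    by (rule sum.neutral) (use False in blast)
  thus ?thesis using g(1) own by (intro bexI[of _ g]) auto
qed

theorem mainTheorem12:
  fixes k l t :: nat and ep :: "nat \<Rightarrow> nat \<times> nat" and I :: "nat set"
  assumes "k \<ge> 2" and "l > 2 * k"
    and "valid_multigraph k l ep"
    and "independent_set k l ep I" and "card I = t"
  shows "\<exists>\<pi>. is_allocation k l \<pi> \<and> EF1 k l ep \<pi> \<and> social_welfare k l ep \<pi> \<ge> real t"
proof -
  note k = assms(1) and lk = assms(2) and vm = assms(3)[unfolded valid_multigraph_def]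
    and ind = assms(4)[unfolded independent_set_def]
  have kpos: "k > 0" using k by simp
  define \<pi> where "\<pi> = (\<lambda>g. case g of Bi r j \<Rightarrow> (if r \<in> I then Sg j else Ag r j)
      | Ci c \<Rightarrow> Ag (k + 1 + (c - 1) mod k) ((c - 1) div k + 1))"
  have alloc: "is_allocation k l \<pi>"
    unfolding is_allocation_def
  proof
    fix g assume g: "g \<in> items k"
    show "\<pi> g \<in> agents k l"
    proof (cases g)
      case (Bi r j) thus ?thesis using g lk unfolding items_def agents_def \<pi>_def by auto
    next
      case (Ci c)
      with g have c: "c \<in> {1..k^2}" unfolding items_def by auto
      have m: "(c - 1) mod k < k" using kpos by simp
      moreover have "(c - 1) div k < k"
      proof -
        have "c \<le> k * k" "1 \<le> c" using c by (auto simp: power2_eq_square)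
        hence "c - 1 < k * k" by linarith
        thus ?thesis by (rule less_mult_imp_div_less)
      qed
      moreover have "k + 1 + (c - 1) mod k \<le> l" using m lk by linarith
      ultimately show ?thesis using Ci unfolding agents_def \<pi>_def by auto
    qed
  qed
  have injAg: "g = h" if "g \<in> items k" "h \<in> items k" "\<pi> g = Ag i j" "\<pi> h = Ag i j" for g h i j
  proof -
    have gb: "\<And>r j'. g = Bi r j' \<Longrightarrow> r \<le> k" and hb: "\<And>r j'. h = Bi r j' \<Longrightarrow> r \<le> k"
      and gc: "\<And>c. g = Ci c \<Longrightarrow> c \<ge> 1" and hc: "\<And>c. h = Ci c \<Longrightarrow> c \<ge> 1"
      using that(1,2) unfolding items_def by auto
    show ?thesis
    proof (cases g; cases h)
      fix c c' assume gg: "g = Ci c" and hh: "h = Ci c'"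
      have "(c - 1) mod k = (c' - 1) mod k" "(c - 1) div k = (c' - 1) div k"
        using that(3,4) gg hh unfolding \<pi>_def by auto
      hence "c - 1 = c' - 1" by (metis div_mult_mod_eq)
      thus ?thesis using gc[OF gg] hc[OF hh] gg hh by simp
    qed (use that(3,4) gb hb in \<open>auto simp: \<pi>_def split: if_splits\<close>)
  qed
  have bSg: "bundleOf k \<pi> (Sg j) = (\<lambda>r. Bi r j) ` I" if "j \<in> {1..k}" for j
  proof
    show "bundleOf k \<pi> (Sg j) \<subseteq> (\<lambda>r. Bi r j) ` I"
    proof
      fix g assume "g \<in> bundleOf k \<pi> (Sg j)"
      hence "\<pi> g = Sg j" unfolding bundleOf_def by auto
      thus "g \<in> (\<lambda>r. Bi r j) ` I"
        by (cases g) (auto simp: \<pi>_def split: if_splits)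
    qed
    show "(\<lambda>r. Bi r j) ` I \<subseteq> bundleOf k \<pi> (Sg j)"
      using that ind unfolding bundleOf_def items_def \<pi>_def by auto
  qed
  have ef1: "EF1 k l ep \<pi>"
    unfolding EF1_def
  proof (intro ballI impI)
    fix x y assume x: "x \<in> agents k l" and y: "y \<in> agents k l" and xy: "x \<noteq> y \<and> bundleOf k \<pi> y \<noteq> {}"
    have own: "0 \<le> bundle_val k ep x (bundleOf k \<pi> x)"
      unfolding bundle_val_def by (rule sum_nonneg) (use val_nonneg[OF k] in auto)
    have fin: "finite (bundleOf k \<pi> y)" unfolding bundleOf_def using finite_items by auto
    have one: "\<forall>g\<in>bundleOf k \<pi> y. \<forall>h\<in>bundleOf k \<pi> y.
        val k ep x g \<noteq> 0 \<longrightarrow> val k ep x h \<noteq> 0 \<longrightarrow> g = h"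
    proof (cases y)
      case (Ag i j) thus ?thesis using injAg[of _ _ i j] unfolding bundleOf_def by auto
    next
      case (Sg j')
      with y have j': "j' \<in> {1..k}" unfolding agents_def by auto
      show ?thesis
      proof (cases x)
        case (Sg j)
        with xy \<open>y = Sg j'\<close> have "j \<noteq> j'" by auto
        thus ?thesis unfolding bSg[OF j'] \<open>y = Sg j'\<close> Sg by auto
      next
        case (Ag i j)
        with x have i: "i \<in> {1..l}" unfolding agents_def by auto
        show ?thesis unfolding bSg[OF j'] \<open>y = Sg j'\<close> Ag
        proof (intro ballI impI)
          fix g h assume g: "g \<in> (\<lambda>r. Bi r j') ` I" and h: "h \<in> (\<lambda>r. Bi r j') ` I"
            and vg: "val k ep (Ag i j) g \<noteq> 0" and vh: "val k ep (Ag i j) h \<noteq> 0"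
          obtain r where r: "r \<in> I" "g = Bi r j'" using g by auto
          obtain r' where r': "r' \<in> I" "h = Bi r' j'" using h by auto
          have e1: "r = fst (ep i) \<or> r = snd (ep i)" using vg r by (auto split: if_splits)
          have e2: "r' = fst (ep i) \<or> r' = snd (ep i)" using vh r' by (auto split: if_splits)
          have "r = r'"
          proof (rule ccontr)
            assume "r \<noteq> r'"
            with e1 e2 have "ep i = (r, r') \<or> ep i = (r', r)"
              by (metis prod.collapse)
            thus False using ind r r' i by blast
          qed
          thus "g = h" using r r' by simp
        qed
      qed
    qed
    show "\<exists>g\<in>bundleOf k \<pi> y. bundle_val k ep x (bundleOf k \<pi> x) \<ge> bundle_val k ep x (bundleOf k \<pi> y - {g})"
      by (rule ef1_pair[OF fin _ one own]) (use xy in auto)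
  qed
  have sw: "social_welfare k l ep \<pi> \<ge> real t"
  proof -
    have vSg: "bundle_val k ep (Sg j) (bundleOf k \<pi> (Sg j)) = real t / real k" if j: "j \<in> {1..k}" for j
    proof -
      have "bundle_val k ep (Sg j) (bundleOf k \<pi> (Sg j)) = (\<Sum>r\<in>I. val k ep (Sg j) (Bi r j))"
        unfolding bSg[OF j] bundle_val_def by (subst sum.reindex) (auto simp: inj_on_def)
      also have "\<dots> = real (card I) * (1 / real k)" by simp
      finally show ?thesis using assms(5) by simp
    qed
    have "real t = (\<Sum>j\<in>{1..k}. real t / real k)" using kpos by simp
    also have "\<dots> = (\<Sum>j\<in>{1..k}. bundle_val k ep (Sg j) (bundleOf k \<pi> (Sg j)))"
      using vSg by simp
    also have "\<dots> = (\<Sum>x\<in>Sg ` {1..k}. bundle_val k ep x (bundleOf k \<pi> x))"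
      by (subst sum.reindex) (auto simp: inj_on_def)
    also have "\<dots> \<le> social_welfare k l ep \<pi>"
      unfolding social_welfare_def
    proof (rule sum_mono2[OF finite_agents])
      show "Sg ` {1..k} \<subseteq> agents k l" unfolding agents_def by auto
      show "0 \<le> bundle_val k ep b (bundleOf k \<pi> b)" for b
        unfolding bundle_val_def using val_nonneg[OF k] by (simp add: sum_nonneg)
    qed
    finally show ?thesis .
  qed
  show ?thesis using alloc ef1 sw by blast
qed

end
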